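(* Let $n>k\ge 1$ be integers, not both even, such that $n\neq Mk$ for every positive integer $M$ (i.e. $k$ does not divide $n$). Let $\alpha=\lceil n/2\rceil-\lfloor (n-k)/2\rfloor$, $\beta=k-\alpha$, and $G=\sqrt{n/k}\,W_n^H\Sigma W_k$. Let $G_k$ be any $k\times k$ submatrix of $G$ formed by $k$ distinct rows of $G$. Then the smallest eigenvalue of $G_kG_k^H$ is strictly less than $1$ and the largest eigenvalue of $G_kG_k^H$ is strictly greater than $1$.
   Context: For a positive integer $l$, $W_l$ denotes the unitary $l\times l$ DFT matrix, $(W_l)_{r,s}=\frac{1}{\sqrt l}e^{-j2\pi(r-1)(s-1)/l}$, and $^H$ denotes conjugate transpose. $\Sigma$ is the $n\times k$ matrix $\begin{pmatrix} I_\alpha & 0\\ 0 & 0\\ 0 & I_\beta\end{pmatrix}$: its first $\alpha$ rows are $(I_\alpha\ 0)$, its last $\beta$ rows are $(0\ I_\beta)$, and its middle $n-k$ rows are zero. *)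

theory Defs
  imports "Jordan_Normal_Form.Schur_Decomposition" "Jordan_Normal_Form.DL_Submatrix"
begin

definition DFT :: "nat \<Rightarrow> complex mat" where
  "DFT l = mat l l (\<lambda>(r, s). complex_of_real (1 / sqrt (real l)) *
                      cis (- 2 * pi * real r * real s / real l))"

definition alpha_nk :: "nat \<Rightarrow> nat \<Rightarrow> int" where
  "alpha_nk n k = \<lceil>real n / 2\<rceil> - \<lfloor>(real n - real k) / 2\<rfloor>"

definition beta_nk :: "nat \<Rightarrow> nat \<Rightarrow> int" where
  "beta_nk n k = int k - alpha_nk n k"

text \<open>The n x k matrix Sigma: first alpha rows (I_alpha 0), last beta rows (0 I_beta),
  middle rows zero (0-indexed).\<close>
definition Sigma_mat :: "nat \<Rightarrow> nat \<Rightarrow> complex mat" where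
  "Sigma_mat n k = mat n k (\<lambda>(i, j).
     if int i < alpha_nk n k \<and> j = i then 1
     else if int n - beta_nk n k \<le> int i \<and> int j = int i - (int n - beta_nk n k) + alpha_nk n k then 1
     else 0)"

definition G_mat :: "nat \<Rightarrow> nat \<Rightarrow> complex mat" where
  "G_mat n k = complex_of_real (sqrt (real n / real k)) \<cdot>\<^sub>m
     (mat_adjoint (DFT n) * Sigma_mat n k * DFT k)"

end

theory Submission
  imports Defs
begin


definition tr :: "complex mat \<Rightarrow> complex" where
  "tr M = (\<Sum>i<dim_row M. M $$ (i,i))"

lemma tr_comm:
  assumes X: "X \<in> carrier_mat n m" and Y: "Y \<in> carrier_mat m n"
  shows "tr (X * Y) = tr (Y * X)"
proof -
  have "tr (X * Y) = (\<Sum>i<n. \<Sum>j<m. X $$ (i,j) * Y $$ (j,i))"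
    using X Y unfolding tr_def by (auto simp: scalar_prod_def row_def col_def intro!: sum.cong atLeast0LessThan)
  also have "\<dots> = (\<Sum>j<m. \<Sum>i<n. Y $$ (j,i) * X $$ (i,j))"
    by (subst sum.swap) (simp add: mult.commute)
  also have "\<dots> = tr (Y * X)"
    using X Y unfolding tr_def by (auto simp: scalar_prod_def row_def col_def intro!: sum.cong atLeast0LessThan)
  finally show ?thesis .
qed

lemma tr_sim:
  assumes M: "M \<in> carrier_mat n n" and P: "P \<in> carrier_mat n n" and Q: "Q \<in> carrier_mat n n"
    and QP: "Q * P = 1\<^sub>m n"
  shows "tr (P * M * Q) = tr M"
proof -
  have "tr (P * M * Q) = tr (Q * (P * M))"
    by (rule tr_comm[of _ n n], insert M P Q, auto)
  also have "Q * (P * M) = (Q * P) * M" using M P Q by (simp add: assoc_mult_mat)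
  also have "\<dots> = M" using QP M by simp
  finally show ?thesis .
qed

lemma eig_real:
  fixes A :: "complex mat"
  assumes A: "A \<in> carrier_mat k k"
    and herm: "\<And>i j. i<k \<Longrightarrow> j<k \<Longrightarrow> A$$(j,i) = cnj (A$$(i,j))"
    and ev: "eigenvalue A e"
  shows "e = of_real (Re e)"
proof -
  from ev obtain v where v: "v \<in> carrier_vec k" "v \<noteq> 0\<^sub>v k" "A *\<^sub>v v = e \<cdot>\<^sub>v v"
    using A unfolding eigenvalue_def eigenvector_def by auto
  define q where "q = (\<Sum>i<k. cnj (v$i) * (\<Sum>j<k. A$$(i,j) * v$j))"
  define N where "N = (\<Sum>i<k. cnj (v$i) * v$i)"
  have Av: "\<And>i. i<k \<Longrightarrow> (\<Sum>j<k. A$$(i,j) * v$j) = e * v$i"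
  proof -
    fix i assume i: "i<k"
    have "(A *\<^sub>v v) $ i = row A i \<bullet> v" using A i by simp
    also have "\<dots> = (\<Sum>j<k. A$$(i,j) * v$j)"
      using A v i by (simp add: scalar_prod_def atLeast0LessThan)
    also have "(A *\<^sub>v v) $ i = e * v$i" using v(3) v(1) i by (metis carrier_vecD index_smult_vec(1))
    finally show "(\<Sum>j<k. A$$(i,j) * v$j) = e * v$i" by simp
  qed
  have "q = (\<Sum>i<k. cnj(v$i) * (e * v$i))" unfolding q_def by (intro sum.cong) (simp_all add: Av)
  hence qN: "q = e * N" unfolding N_def
    by (simp add: sum_distrib_left mult.commute mult.left_commute)
  have "cnj q = (\<Sum>i<k. \<Sum>j<k. v$i * (A$$(j,i) * cnj (v$j)))"
  proof -
    have "cnj q = (\<Sum>i<k. \<Sum>j<k. v$i * (cnj (A$$(i,j)) * cnj (v$j)))"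
      unfolding q_def by (simp add: sum_distrib_left)
    also have "\<dots> = (\<Sum>i<k. \<Sum>j<k. v$i * (A$$(j,i) * cnj (v$j)))"
    proof (intro sum.cong refl)
      fix i j assume "i \<in> {..<k}" "j \<in> {..<k}"
      hence "A$$(j,i) = cnj (A$$(i,j))" by (intro herm) auto
      thus "v$i * (cnj (A$$(i,j)) * cnj (v$j)) = v$i * (A$$(j,i) * cnj (v$j))" by simp
    qed
    finally show ?thesis .
  qed
  also have "\<dots> = (\<Sum>j<k. \<Sum>i<k. cnj (v$j) * (A$$(j,i) * v$i))"
    by (subst sum.swap) (simp add: mult.commute mult.left_commute)
  also have "\<dots> = q" unfolding q_def by (simp add: sum_distrib_left)
  finally have cq: "cnj q = q" .
  have Nr: "N = of_real (\<Sum>i<k. (cmod (v$i))^2)"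
  proof -
    have "N = (\<Sum>i<k. complex_of_real ((cmod (v$i))^2))"
      unfolding N_def by (intro sum.cong refl) (metis complex_norm_square mult.commute)
    thus ?thesis by simp
  qed
  obtain i where i: "i<k" "v$i \<noteq> 0" using v(1,2) by (metis carrier_vecD eq_vecI index_zero_vec(1,2))
  have "(\<Sum>i<k. (cmod (v$i))^2) > 0"
    by (rule sum_pos2[of _ i]) (use i in auto)
  hence N0: "N \<noteq> 0" using Nr by (metis of_real_eq_0_iff order_less_irrefl)
  have cN: "cnj N = N" using Nr by simp
  have "cnj e * N = e * N" using cq qN cN by (metis complex_cnj_mult)
  hence "cnj e = e" using N0 by simp
  thus ?thesis by (metis Reals_cnj_iff complex_is_Real_iff of_real_Re)
qed

lemma herm_eig:
  fixes A :: "complex mat"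
  assumes A: "A \<in> carrier_mat k k" and k: "k \<ge> 1"
    and herm: "\<And>i j. i<k \<Longrightarrow> j<k \<Longrightarrow> A$$(j,i) = cnj (A$$(i,j))"
    and dg: "\<And>i. i<k \<Longrightarrow> A$$(i,i) = 1"
    and off: "i0<k" "j0<k" "i0\<noteq>j0" "A$$(i0,j0) \<noteq> 0"
  shows "Min {t::real. eigenvalue A (complex_of_real t)} < 1 \<and>
         Max {t::real. eigenvalue A (complex_of_real t)} > 1"
proof -
  obtain es where es: "char_poly A = (\<Prod>a\<leftarrow>es. [:- a, 1:])" "length es = k"
    using char_poly_factorized[OF A] by blast
  obtain B P Q where sd: "schur_decomposition A es = (B,P,Q)" by (cases "schur_decomposition A es") auto
  from schur_decomposition[OF A es(1) sd]
  have sim: "similar_mat_wit A B P Q" and ut: "upper_triangular B" and dB: "diag_mat B = es" by auto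
  from sim A have B: "B \<in> carrier_mat k k" and P: "P \<in> carrier_mat k k" and Q: "Q \<in> carrier_mat k k"
    and QP: "Q * P = 1\<^sub>m k" and AB: "A = P * B * Q"
    unfolding similar_mat_wit_def Let_def by auto
  have eigB: "\<And>i. i<k \<Longrightarrow> eigenvalue A (B$$(i,i))"
  proof -
    fix i assume i: "i<k"
    have "B$$(i,i) \<in> set es" using dB B i unfolding diag_mat_def by auto
    thus "eigenvalue A (B$$(i,i))" unfolding eigenvalue_root_char_poly[OF A] es(1)
      by (rule linear_poly_root)
  qed
  define d where "d i = Re (B$$(i,i))" for i
  have Bd: "\<And>i. i<k \<Longrightarrow> B$$(i,i) = of_real (d i)"
    unfolding d_def using eig_real[OF A herm eigB] by blast
  have Tsub: "{t::real. eigenvalue A (complex_of_real t)} \<subseteq> d ` {..<k}"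
  proof
    fix t assume "t \<in> {t::real. eigenvalue A (complex_of_real t)}"
    hence "poly (char_poly A) (of_real t) = 0" using eigenvalue_root_char_poly[OF A] by auto
    hence "of_real t \<in> set es" unfolding es(1) poly_prod_list_zero_iff by auto
    then obtain i where i: "i<k" "of_real t = B$$(i,i)" using dB B unfolding diag_mat_def by auto
    thus "t \<in> d ` {..<k}" using Bd[OF i(1)] by auto
  qed
  have dT: "\<And>i. i<k \<Longrightarrow> d i \<in> {t::real. eigenvalue A (complex_of_real t)}"
    using eigB Bd by auto
  have finT: "finite {t::real. eigenvalue A (complex_of_real t)}"
    using Tsub finite_subset by blast
  have trA: "tr A = of_nat k" unfolding tr_def using A dg by simp
  have trB: "tr B = of_real (\<Sum>i<k. d i)" unfolding tr_def using B Bd by simp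
  have "tr A = tr B" using tr_sim[OF B P Q QP] AB by simp
  hence sum1: "(\<Sum>i<k. d i) = real k" using trA trB by (metis of_real_eq_iff of_real_of_nat_eq)
  have "A * A = P * (B * B) * Q"
  proof -
    have "A ^\<^sub>m 2 = P * B ^\<^sub>m 2 * Q" using similar_mat_wit_pow_id[OF sim] .
    moreover have "A ^\<^sub>m 2 = A * A" using A by (simp add: numeral_2_eq_2)
    moreover have "B ^\<^sub>m 2 = B * B" using B by (simp add: numeral_2_eq_2)
    ultimately show ?thesis by simp
  qed
  hence trAA: "tr (A * A) = tr (B * B)" using tr_sim[of "B*B" k P Q] B P Q QP by simp
  have BB: "\<And>i. i<k \<Longrightarrow> (B*B)$$(i,i) = B$$(i,i) * B$$(i,i)"
  proof -
    fix i assume i: "i<k"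
    have "(B*B)$$(i,i) = (\<Sum>j<k. B$$(i,j) * B$$(j,i))"
      using B i by (auto simp: scalar_prod_def row_def col_def intro!: sum.cong)
    also have "\<dots> = B$$(i,i) * B$$(i,i)"
    proof -
      have "(\<Sum>j<k. B$$(i,j) * B$$(j,i)) = B$$(i,i) * B$$(i,i) + (\<Sum>j\<in>{..<k}-{i}. B$$(i,j) * B$$(j,i))"
        using i by (subst sum.remove[of _ i]) auto
      also have "(\<Sum>j\<in>{..<k}-{i}. B$$(i,j) * B$$(j,i)) = 0"
      proof (rule sum.neutral, intro ballI)
        fix j assume j: "j \<in> {..<k}-{i}"
        show "B$$(i,j) * B$$(j,i) = 0"
        proof (cases "j < i")
          case True thus ?thesis using ut B i unfolding upper_triangular_def by auto
        next
          case False hence "i < j" using j by auto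
          thus ?thesis using ut B j unfolding upper_triangular_def by auto
        qed
      qed
      finally show ?thesis by simp
    qed
    finally show "(B*B)$$(i,i) = B$$(i,i) * B$$(i,i)" .
  qed
  have trBB: "tr (B*B) = of_real (\<Sum>i<k. d i ^ 2)"
  proof -
    have dBB: "dim_row (B*B) = k" using B by simp
    have "tr (B*B) = (\<Sum>i<k. (B*B)$$(i,i))" unfolding tr_def dBB ..
    also have "\<dots> = (\<Sum>i<k. of_real (d i ^ 2))"
      by (intro sum.cong refl) (simp add: BB Bd power2_eq_square del: index_mult_mat)
    finally show ?thesis by simp
  qed
  have AA: "tr (A*A) = of_real (\<Sum>i<k. \<Sum>j<k. (cmod (A$$(i,j)))^2)"
  proof -
    have dAA: "dim_row (A*A) = k" using A by simp
    have "tr (A*A) = (\<Sum>i<k. (A*A)$$(i,i))" unfolding tr_def dAA ..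
    also have "\<dots> = (\<Sum>i<k. \<Sum>j<k. A$$(i,j) * A$$(j,i))"
    proof (intro sum.cong refl)
      fix i assume "i \<in> {..<k}"
      thus "(A*A)$$(i,i) = (\<Sum>j<k. A$$(i,j) * A$$(j,i))"
        using A by (simp add: scalar_prod_def atLeast0LessThan)
    qed
    also have "\<dots> = (\<Sum>i<k. \<Sum>j<k. of_real ((cmod (A$$(i,j)))^2))"
    proof (intro sum.cong refl)
      fix i j assume "i \<in> {..<k}" "j \<in> {..<k}"
      hence "A$$(j,i) = cnj (A$$(i,j))" by (intro herm) auto
      thus "A$$(i,j) * A$$(j,i) = of_real ((cmod (A$$(i,j)))^2)"
        using complex_norm_square[of "A$$(i,j)"] by simp
    qed
    finally show ?thesis by simp
  qed
  have sum2: "(\<Sum>i<k. d i ^ 2) = (\<Sum>i<k. \<Sum>j<k. (cmod (A$$(i,j)))^2)"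
    using trAA trBB AA by (metis of_real_eq_iff)
  have rowge: "\<And>i. i<k \<Longrightarrow> 1 \<le> (\<Sum>j<k. (cmod (A$$(i,j)))^2)"
  proof -
    fix i assume i: "i<k"
    have "(\<Sum>j\<in>{i}. (cmod (A$$(i,j)))^2) \<le> (\<Sum>j<k. (cmod (A$$(i,j)))^2)"
      by (rule sum_mono2) (use i in auto)
    thus "1 \<le> (\<Sum>j<k. (cmod (A$$(i,j)))^2)" using dg[OF i] by simp
  qed
  have row0: "1 < (\<Sum>j<k. (cmod (A$$(i0,j)))^2)"
  proof -
    have "(\<Sum>j\<in>{i0,j0}. (cmod (A$$(i0,j)))^2) \<le> (\<Sum>j<k. (cmod (A$$(i0,j)))^2)"
      by (rule sum_mono2) (use off in auto)
    moreover have "(\<Sum>j\<in>{i0,j0}. (cmod (A$$(i0,j)))^2) = 1 + (cmod (A$$(i0,j0)))^2"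
      using off dg by simp
    moreover have "(cmod (A$$(i0,j0)))^2 > 0" using off by simp
    ultimately show ?thesis by linarith
  qed
  have "(\<Sum>i<k. (1::real)) < (\<Sum>i<k. \<Sum>j<k. (cmod (A$$(i,j)))^2)"
    by (rule sum_strict_mono_ex1) (use rowge row0 off in auto)
  hence big: "(\<Sum>i<k. d i ^ 2) > real k" using sum2 by simp
  have ex_lt: "\<exists>i<k. d i < 1"
  proof (rule ccontr)
    assume "\<not> ?thesis" hence ge: "\<And>i. i<k \<Longrightarrow> d i \<ge> 1" by force
    have "(\<Sum>i<k. d i - 1) = 0" using sum1 by (simp add: sum_subtractf)
    hence "\<forall>i\<in>{..<k}. d i - 1 = 0" using ge by (subst sum_nonneg_eq_0_iff[symmetric]) auto
    hence "(\<Sum>i<k. d i ^ 2) = real k" by simp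
    thus False using big by simp
  qed
  have ex_gt: "\<exists>i<k. d i > 1"
  proof (rule ccontr)
    assume "\<not> ?thesis" hence ge: "\<And>i. i<k \<Longrightarrow> 1 - d i \<ge> 0" by force
    have "(\<Sum>i<k. 1 - d i) = 0" using sum1 by (simp add: sum_subtractf)
    hence "\<forall>i\<in>{..<k}. 1 - d i = 0" using ge by (subst sum_nonneg_eq_0_iff[symmetric]) auto
    hence "(\<Sum>i<k. d i ^ 2) = real k" by simp
    thus False using big by simp
  qed
  from ex_lt obtain i where i: "i<k" "d i < 1" by blast
  from ex_gt obtain j where j: "j<k" "d j > 1" by blast
  have "Min {t::real. eigenvalue A (complex_of_real t)} \<le> d i" using finT dT[OF i(1)] by (rule Min_le)
  moreover have "Max {t::real. eigenvalue A (complex_of_real t)} \<ge> d j" using finT dT[OF j(1)] by (rule Max_ge)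
  ultimately show ?thesis using i j by linarith
qed




lemma alpha_eq: assumes "k < n" shows "alpha_nk n k = - (- int n div 2) - int ((n-k) div 2)"
proof -
  have "\<lceil>real n / 2\<rceil> = - (- int n div 2)"
    using ceiling_divide_eq_div[of "int n" 2] by simp
  moreover have "\<lfloor>(real n - real k) / 2\<rfloor> = \<lfloor>real (n-k) / real (2::nat)\<rfloor>" using assms by (simp add: of_nat_diff)
  hence "\<lfloor>(real n - real k) / 2\<rfloor> = int ((n-k) div 2)" using floor_divide_of_nat_eq by metis
  ultimately show ?thesis unfolding alpha_nk_def by simp
qed

lemma alpha_bounds: assumes "k < n" and k1: "1 \<le> k" shows "0 \<le> alpha_nk n k" "alpha_nk n k \<le> int k"
proof -
  have "int ((n-k) div 2) = (int n - int k) div 2" using assms by (simp add: zdiv_int of_nat_diff)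
  thus "0 \<le> alpha_nk n k" "alpha_nk n k \<le> int k" using assms unfolding alpha_eq[OF assms(1)] by presburger+
qed

definition sig :: "nat \<Rightarrow> nat \<Rightarrow> nat \<Rightarrow> nat" where
  "sig n k l = (if int l < alpha_nk n k then l else l + n - k)"

lemma Sigma_index: assumes kn: "k < n" and i: "i < n" and l: "l < k" and k1: "1 \<le> k"
  shows "Sigma_mat n k $$ (i,l) = (if i = sig n k l then 1 else 0)"
proof -
  define a where "a = nat (alpha_nk n k)"
  have al: "alpha_nk n k = int a" unfolding a_def using alpha_bounds[OF kn k1] by simp
  have ak: "a \<le> k" using alpha_bounds[OF kn k1] al by simp
  have e: "Sigma_mat n k $$ (i,l) = (if int i < alpha_nk n k \<and> l = i then 1
     else if int n - beta_nk n k \<le> int i \<and> int l = int i - (int n - beta_nk n k) + alpha_nk n k then 1 else 0)"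
    unfolding Sigma_mat_def using i l by simp
  have c1: "(int i < alpha_nk n k \<and> l = i) = (l < a \<and> i = l)" unfolding al by auto
  have c2: "(int n - beta_nk n k \<le> int i \<and> int l = int i - (int n - beta_nk n k) + alpha_nk n k)
      = (int n - int k + int a \<le> int i \<and> int l = int i - int n + int k)"
    unfolding beta_nk_def al by (simp add: algebra_simps)
  have sg: "sig n k l = (if l < a then l else l + n - k)" unfolding sig_def al by simp
  show ?thesis
  proof (cases "l < a")
    case True
    have "\<not> (int n - int k + int a \<le> int i \<and> int l = int i - int n + int k)" using True by linarith
    thus ?thesis unfolding e c1 c2 sg using True by simp
  next
    case False
    have "(int n - int k + int a \<le> int i \<and> int l = int i - int n + int k) = (i = l + n - k)"
      using False kn l by linarith
    thus ?thesis unfolding e c1 c2 sg using False by simp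
  qed
qed

lemma sig_lt: "k < n \<Longrightarrow> l < k \<Longrightarrow> sig n k l < n"
  unfolding sig_def by auto

lemma DFT_index: "r < l \<Longrightarrow> s < l \<Longrightarrow> DFT l $$ (r,s) =
   complex_of_real (1 / sqrt (real l)) * cis (- 2 * pi * real r * real s / real l)"
  unfolding DFT_def by simp

lemma DFT_carrier[simp]: "DFT l \<in> carrier_mat l l" unfolding DFT_def by simp

lemma DFT_dim[simp]: "dim_row (DFT l) = l" "dim_col (DFT l) = l" unfolding DFT_def by simp_all

lemma adj_dim[simp]: "dim_row (mat_adjoint A) = dim_col A" "dim_col (mat_adjoint A) = dim_row A"
  unfolding mat_adjoint_def by (simp_all add: mat_of_rows_def)

lemma adj_carrier[simp]: "A \<in> carrier_mat n m \<Longrightarrow> mat_adjoint A \<in> carrier_mat m n"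
  by (metis adj_dim carrier_matD carrier_matI)

lemma adj_index: assumes i: "i < dim_col A" and j: "j < dim_row A"
  shows "mat_adjoint (A :: complex mat) $$ (i,j) = cnj (A $$ (j,i))"
proof -
  have "mat_adjoint A $$ (i,j) = map conjugate (cols A) ! i $ j"
    unfolding mat_adjoint_def by (rule mat_of_rows_index) (use i j in simp_all)
  also have "map conjugate (cols A) ! i = conjugate (col A i)" using i by simp
  also have "conjugate (col A i) $ j = conjugate (col A i $ j)" using j by simp
  also have "col A i $ j = A $$ (j,i)" using i j by simp
  finally show ?thesis by simp
qed

lemma adj_mult: assumes A: "(A :: complex mat) \<in> carrier_mat n m" and B: "B \<in> carrier_mat m p"
  shows "mat_adjoint (A * B) = mat_adjoint B * mat_adjoint A"
proof (rule eq_matI)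
  fix i j assume i: "i < dim_row (mat_adjoint B * mat_adjoint A)" and j: "j < dim_col (mat_adjoint B * mat_adjoint A)"
  hence i': "i < p" and j': "j < n" using A B by auto
  have "mat_adjoint (A * B) $$ (i,j) = cnj ((A*B) $$ (j,i))" using i' j' A B by (simp add: adj_index)
  also have "\<dots> = cnj (\<Sum>l<m. A$$(j,l) * B$$(l,i))"
    using i' j' A B by (simp add: scalar_prod_def atLeast0LessThan)
  also have "\<dots> = (\<Sum>l<m. mat_adjoint B $$ (i,l) * mat_adjoint A $$ (l,j))"
    using i' j' A B by (simp add: adj_index mult.commute)
  also have "\<dots> = (mat_adjoint B * mat_adjoint A) $$ (i,j)"
    using i' j' A B by (simp add: scalar_prod_def atLeast0LessThan)
  finally show "mat_adjoint (A * B) $$ (i,j) = (mat_adjoint B * mat_adjoint A) $$ (i,j)" .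
qed (use A B in auto)

lemma XXH_index: assumes X: "(X :: complex mat) \<in> carrier_mat m p" and i: "i < m" and j: "j < m"
  shows "(X * mat_adjoint X) $$ (i,j) = (\<Sum>l<p. X$$(i,l) * cnj (X$$(j,l)))"
  using X i j by (simp add: scalar_prod_def atLeast0LessThan adj_index)

lemma cis_root: assumes "n > 0"
  shows "cis (2 * pi * real_of_int x / real n) = 1 \<longleftrightarrow> int n dvd x"
proof
  assume h: "cis (2 * pi * real_of_int x / real n) = 1"
  hence "cos (2 * pi * real_of_int x / real n) = 1" by (metis cis.sel(1) one_complex.sel(1))
  then obtain m where m: "2 * pi * real_of_int x / real n = real_of_int m * 2 * pi"
    using cos_one_2pi_int by blast
  hence "real_of_int x = real_of_int m * real n" using assms by (simp add: field_simps)
  hence "x = m * int n" by (metis of_int_eq_iff of_int_mult of_int_of_nat_eq)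
  thus "int n dvd x" by simp
next
  assume "int n dvd x"
  then obtain m where "x = int n * m" by blast
  hence "2 * pi * real_of_int x / real n = 2 * pi * real_of_int m" using assms by simp
  thus "cis (2 * pi * real_of_int x / real n) = 1"
    by (simp add: cis.ctr cos_int_2pin sin_int_2pin complex_eq_iff)
qed




lemma geo0: fixes z :: complex assumes "z ^ k = 1" "z \<noteq> 1" shows "(\<Sum>j<k. z ^ j) = 0"
  using power_diff_1_eq[of z k] assms by simp

lemma cis_pair: "cnj (complex_of_real c * cis a) * (complex_of_real c * cis b) = complex_of_real (c^2) * cis (b - a)"
  by (simp add: cis_cnj cis_mult power2_eq_square mult_ac)

lemma DFT_unitary: assumes k: "k > 0" shows "DFT k * mat_adjoint (DFT k) = 1\<^sub>m k"
proof (rule eq_matI)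
  fix l l' assume "l < dim_row (1\<^sub>m k)" "l' < dim_col (1\<^sub>m k)"
  hence l: "l < k" and l': "l' < k" by auto
  define x where "x = int l' - int l"
  define z where "z = cis (2 * pi * real_of_int x / real k)"
  have "(DFT k * mat_adjoint (DFT k)) $$ (l,l') = (\<Sum>j<k. DFT k $$ (l,j) * cnj (DFT k $$ (l',j)))"
    using XXH_index[OF DFT_carrier l l'] .
  also have "\<dots> = (\<Sum>j<k. complex_of_real (1 / real k) * z ^ j)"
  proof (intro sum.cong refl)
    fix j assume j: "j \<in> {..<k}"
    have "DFT k $$ (l,j) * cnj (DFT k $$ (l',j)) = cnj (DFT k $$ (l',j)) * DFT k $$ (l,j)" by simp
    also have "\<dots> = complex_of_real ((1 / sqrt (real k))^2) *
       cis (- 2 * pi * real l * real j / real k - (- 2 * pi * real l' * real j / real k))"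
    proof -
      have "j < k" using j by simp
      hence "DFT k $$ (l',j) = complex_of_real (1 / sqrt (real k)) * cis (- 2 * pi * real l' * real j / real k)"
        "DFT k $$ (l,j) = complex_of_real (1 / sqrt (real k)) * cis (- 2 * pi * real l * real j / real k)"
        using l l' by (simp_all add: DFT_index)
      thus ?thesis by (simp only: cis_pair)
    qed
    also have "(1 / sqrt (real k))^2 = 1 / real k" using k by (simp add: power_divide)
    also have "- 2 * pi * real l * real j / real k - (- 2 * pi * real l' * real j / real k)
        = real j * (2 * pi * real_of_int x / real k)"
    proof -
      have xl: "real l' = real_of_int x + real l" unfolding x_def by simp
      show ?thesis unfolding xl using k by (simp add: field_simps)
    qed
    also have "cis (real j * (2 * pi * real_of_int x / real k)) = z ^ j"
      unfolding z_def by (simp add: DeMoivre)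
    finally show "DFT k $$ (l,j) * cnj (DFT k $$ (l',j)) = complex_of_real (1 / real k) * z ^ j" .
  qed
  also have "\<dots> = complex_of_real (1 / real k) * (\<Sum>j<k. z ^ j)" by (simp add: sum_distrib_left)
  also have "\<dots> = 1\<^sub>m k $$ (l,l')"
  proof (cases "l = l'")
    case True
    hence "z = 1" unfolding z_def x_def by simp
    thus ?thesis using True l k by simp
  next
    case False
    have zk: "z ^ k = 1" unfolding z_def DeMoivre
      using cis_root[OF k, of "int k * x"] k by (simp add: field_simps)
    have x0: "x \<noteq> 0" using False unfolding x_def by simp
    have xa: "\<bar>x\<bar> < int k" using l l' unfolding x_def by simp
    have "\<not> int k dvd x" using dvd_imp_le_int[OF x0] xa by fastforce
    hence "z \<noteq> 1" unfolding z_def using cis_root[OF k] by simp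
    hence "(\<Sum>j<k. z ^ j) = 0" using geo0 zk by blast
    thus ?thesis using False l l' by simp
  qed
  finally show "(DFT k * mat_adjoint (DFT k)) $$ (l,l') = 1\<^sub>m k $$ (l,l')" .
qed auto




definition Hm :: "nat \<Rightarrow> nat \<Rightarrow> complex mat" where
  "Hm n k = mat_adjoint (DFT n) * Sigma_mat n k"

lemma Sigma_dim[simp]: "dim_row (Sigma_mat n k) = n" "dim_col (Sigma_mat n k) = k" unfolding Sigma_mat_def by simp_all

lemma Sigma_carrier: "Sigma_mat n k \<in> carrier_mat n k"
  unfolding Sigma_mat_def by simp

lemma Hm_carrier: "Hm n k \<in> carrier_mat n k"
  unfolding Hm_def by (rule mult_carrier_mat[OF adj_carrier[OF DFT_carrier] Sigma_carrier])

lemma Hm_index: assumes "1 \<le> k" "k < n" "r < n" "l < k"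
  shows "Hm n k $$ (r,l) = cnj (DFT n $$ (sig n k l, r))"
proof -
  have "Hm n k $$ (r,l) = (\<Sum>i<n. mat_adjoint (DFT n) $$ (r,i) * Sigma_mat n k $$ (i,l))"
  proof -
    have "Hm n k $$ (r,l) = row (mat_adjoint (DFT n)) r \<bullet> col (Sigma_mat n k) l"
      unfolding Hm_def using assms by (intro index_mult_mat(1)) simp_all
    also have "\<dots> = (\<Sum>i<n. mat_adjoint (DFT n) $$ (r,i) * Sigma_mat n k $$ (i,l))"
      unfolding scalar_prod_def using assms by (intro sum.cong) (auto simp: atLeast0LessThan)
    finally show ?thesis .
  qed
  also have "\<dots> = (\<Sum>i<n. if i = sig n k l then cnj (DFT n $$ (sig n k l, r)) else 0)"
    using assms by (intro sum.cong refl) (simp add: adj_index Sigma_index)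
  also have "\<dots> = cnj (DFT n $$ (sig n k l, r))" using sig_lt assms by simp
  finally show ?thesis .
qed





lemma G_eq: "G_mat n k = complex_of_real (sqrt (real n / real k)) \<cdot>\<^sub>m (Hm n k * DFT k)"
  unfolding G_mat_def Hm_def ..

lemma G_carrier: "G_mat n k \<in> carrier_mat n k"
  unfolding G_eq by (rule smult_carrier_mat[OF mult_carrier_mat[OF Hm_carrier DFT_carrier]])

lemma HWW: assumes H: "H \<in> carrier_mat n k" and k1: "1 \<le> k"
  shows "(H * DFT k) * mat_adjoint (H * DFT k) = H * mat_adjoint H"
proof -
  have HA: "mat_adjoint H \<in> carrier_mat k n" using H by simp
  have WA: "mat_adjoint (DFT k) \<in> carrier_mat k k" by simp
  have "mat_adjoint (H * DFT k) = mat_adjoint (DFT k) * mat_adjoint H"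
    by (rule adj_mult[OF H DFT_carrier])
  hence "(H * DFT k) * mat_adjoint (H * DFT k) = (H * DFT k) * (mat_adjoint (DFT k) * mat_adjoint H)" by simp
  also have "\<dots> = H * (DFT k * (mat_adjoint (DFT k) * mat_adjoint H))"
    by (rule assoc_mult_mat[OF H DFT_carrier mult_carrier_mat[OF WA HA]])
  also have "DFT k * (mat_adjoint (DFT k) * mat_adjoint H) = (DFT k * mat_adjoint (DFT k)) * mat_adjoint H"
    by (rule assoc_mult_mat[OF DFT_carrier WA HA, symmetric])
  also have "DFT k * mat_adjoint (DFT k) = 1\<^sub>m k" using DFT_unitary k1 by simp
  also have "1\<^sub>m k * mat_adjoint H = mat_adjoint H" by (rule left_mult_one_mat[OF HA])
  finally show ?thesis .
qed

lemma GGH: assumes k1: "1 \<le> k" and kn: "k < n" and r: "r < n" and s: "s < n"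
  shows "(G_mat n k * mat_adjoint (G_mat n k)) $$ (r,s) =
    complex_of_real (1 / real k) * (\<Sum>l<k. cis (2 * pi * real (sig n k l) * (real r - real s) / real n))"
proof -
  define H where "H = Hm n k"
  define X where "X = H * DFT k"
  define c where "c = complex_of_real (sqrt (real n / real k))"
  define S where "S = (\<Sum>l<k. cis (2 * pi * real (sig n k l) * (real r - real s) / real n))"
  have H: "H \<in> carrier_mat n k" unfolding H_def by (rule Hm_carrier)
  have X: "X \<in> carrier_mat n k" unfolding X_def using mult_carrier_mat[OF H DFT_carrier] .
  have G: "G_mat n k = c \<cdot>\<^sub>m X" unfolding G_eq X_def H_def c_def ..
  have XX: "X * mat_adjoint X = H * mat_adjoint H" unfolding X_def using HWW[OF H k1] .
  have "(G_mat n k * mat_adjoint (G_mat n k)) $$ (r,s) = (\<Sum>j<k. G_mat n k $$ (r,j) * cnj (G_mat n k $$ (s,j)))"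
    by (rule XXH_index[OF G_carrier r s])
  also have "\<dots> = (\<Sum>j<k. (c * cnj c) * (X $$ (r,j) * cnj (X $$ (s,j))))"
  proof (intro sum.cong refl)
    fix j assume "j \<in> {..<k}"
    hence "G_mat n k $$ (r,j) = c * X $$ (r,j)" "G_mat n k $$ (s,j) = c * X $$ (s,j)"
      unfolding G using X r s by auto
    thus "G_mat n k $$ (r,j) * cnj (G_mat n k $$ (s,j)) = (c * cnj c) * (X $$ (r,j) * cnj (X $$ (s,j)))"
      by (simp add: mult_ac)
  qed
  also have "\<dots> = (c * cnj c) * (\<Sum>j<k. X $$ (r,j) * cnj (X $$ (s,j)))"
    by (rule sum_distrib_left[symmetric])
  also have "(\<Sum>j<k. X $$ (r,j) * cnj (X $$ (s,j))) = (X * mat_adjoint X) $$ (r,s)"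
    by (rule XXH_index[OF X r s, symmetric])
  also have "\<dots> = (\<Sum>l<k. H $$ (r,l) * cnj (H $$ (s,l)))"
    unfolding XX by (rule XXH_index[OF H r s])
  also have "\<dots> = (\<Sum>l<k. complex_of_real (1 / real n) * cis (2 * pi * real (sig n k l) * (real r - real s) / real n))"
  proof (intro sum.cong refl)
    fix l assume l: "l \<in> {..<k}"
    have sl: "sig n k l < n" using sig_lt kn l by simp
    have "H $$ (r,l) * cnj (H $$ (s,l)) = cnj (DFT n $$ (sig n k l, r)) * DFT n $$ (sig n k l, s)"
      unfolding H_def using Hm_index k1 kn r s l by simp
    also have "\<dots> = complex_of_real ((1 / sqrt (real n))^2) *
       cis (- 2 * pi * real (sig n k l) * real s / real n - (- 2 * pi * real (sig n k l) * real r / real n))"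
    proof -
      have "DFT n $$ (sig n k l, r) = complex_of_real (1 / sqrt (real n)) * cis (- 2 * pi * real (sig n k l) * real r / real n)"
        "DFT n $$ (sig n k l, s) = complex_of_real (1 / sqrt (real n)) * cis (- 2 * pi * real (sig n k l) * real s / real n)"
        using sl r s by (simp_all add: DFT_index)
      thus ?thesis by (simp only: cis_pair)
    qed
    also have "(1 / sqrt (real n))^2 = 1 / real n" using kn by (simp add: power_divide)
    also have "- 2 * pi * real (sig n k l) * real s / real n - (- 2 * pi * real (sig n k l) * real r / real n)
       = 2 * pi * real (sig n k l) * (real r - real s) / real n"
      using kn by (simp add: field_simps)
    finally show "H $$ (r,l) * cnj (H $$ (s,l)) = complex_of_real (1 / real n) * cis (2 * pi * real (sig n k l) * (real r - real s) / real n)" .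
  qed
  also have "\<dots> = complex_of_real (1 / real n) * S" unfolding S_def by (rule sum_distrib_left[symmetric])
  also have "c * cnj c = complex_of_real (real n / real k)"
  proof -
    have "c * cnj c = complex_of_real (sqrt (real n / real k) * sqrt (real n / real k))"
      unfolding c_def by (simp only: complex_cnj_complex_of_real of_real_mult)
    also have "sqrt (real n / real k) * sqrt (real n / real k) = real n / real k" by simp
    finally show ?thesis .
  qed
  also have "complex_of_real (real n / real k) * (complex_of_real (1 / real n) * S)
     = complex_of_real (real n / real k * (1 / real n)) * S" by simp
  also have "real n / real k * (1 / real n) = 1 / real k" using kn by simp
  finally show ?thesis unfolding S_def .
qed




lemma sig_sum: fixes z :: complex
  assumes zn: "z ^ n = 1" and k1: "1 \<le> k" and kn: "k < n"
  shows "z ^ (k - nat (alpha_nk n k)) * (\<Sum>l<k. z ^ sig n k l) = (\<Sum>m<k. z ^ m)"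
proof -
  define a where "a = nat (alpha_nk n k)"
  define b where "b = k - a"
  have a0: "alpha_nk n k = int a" unfolding a_def using alpha_bounds[OF kn k1] by simp
  have ak: "a \<le> k" using alpha_bounds[OF kn k1] a0 by simp
  have kab: "k = a + b" unfolding b_def using ak by simp
  have sg: "\<And>l. sig n k l = (if l < a then l else l + n - k)" unfolding sig_def a0 by simp
  have "(\<Sum>l<k. z ^ sig n k l) = (\<Sum>l\<in>{0..<a}. z ^ sig n k l) + (\<Sum>l\<in>{a..<k}. z ^ sig n k l)"
    using ak by (simp add: lessThan_atLeast0 sum.atLeastLessThan_concat)
  hence "z ^ b * (\<Sum>l<k. z ^ sig n k l) = (\<Sum>l\<in>{0..<a}. z ^ b * z ^ sig n k l) + (\<Sum>l\<in>{a..<k}. z ^ b * z ^ sig n k l)"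
    by (simp add: sum_distrib_left distrib_left)
  also have "(\<Sum>l\<in>{0..<a}. z ^ b * z ^ sig n k l) = (\<Sum>l\<in>{0..<a}. z ^ (l + b))"
    by (intro sum.cong refl) (simp add: sg power_add mult.commute)
  also have "\<dots> = (\<Sum>m\<in>{0+b..<a+b}. z ^ m)" by (rule sum.shift_bounds_nat_ivl[symmetric])
  also have "(\<Sum>l\<in>{a..<k}. z ^ b * z ^ sig n k l) = (\<Sum>l\<in>{0+a..<b+a}. z ^ (l - a))"
  proof (intro sum.cong)
    show "{a..<k} = {0+a..<b+a}" using kab by (simp add: add.commute)
  next
    fix l assume l: "l \<in> {0+a..<b+a}"
    have la: "\<not> l < a" using l by simp
    have s1: "sig n k l = l + n - k" unfolding sg using la by simp
    have "b + sig n k l = (l - a) + n" unfolding s1 using kab kn la by simp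
    hence "z ^ b * z ^ sig n k l = z ^ (l - a) * z ^ n" by (metis power_add)
    thus "z ^ b * z ^ sig n k l = z ^ (l - a)" using zn by simp
  qed
  also have "\<dots> = (\<Sum>m\<in>{0..<b}. z ^ m)" by (subst sum.shift_bounds_nat_ivl) simp
  finally have "z ^ b * (\<Sum>l<k. z ^ sig n k l) = (\<Sum>m\<in>{0..<b}. z ^ m) + (\<Sum>m\<in>{b..<k}. z ^ m)"
    using kab by (simp add: add.commute)
  also have "\<dots> = (\<Sum>m<k. z ^ m)" using kab by (simp add: lessThan_atLeast0 sum.atLeastLessThan_concat)
  finally show ?thesis unfolding b_def a_def .
qed

definition Fs :: "nat \<Rightarrow> nat \<Rightarrow> nat \<Rightarrow> nat \<Rightarrow> complex" where
  "Fs n k r s = (\<Sum>l<k. cis (2 * pi * real (sig n k l) * (real r - real s) / real n))"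

lemma Fs_diag: "Fs n k r r = of_nat k" unfolding Fs_def by simp

lemma Fs_herm: "Fs n k s r = cnj (Fs n k r s)"
  unfolding Fs_def cnj_sum cis_cnj
proof (intro sum.cong refl)
  fix l
  have "2 * pi * real (sig n k l) * (real s - real r) / real n = - (2 * pi * real (sig n k l) * (real r - real s) / real n)"
    by (metis minus_diff_eq mult_minus_right minus_divide_left)
  thus "cis (2 * pi * real (sig n k l) * (real s - real r) / real n) = cis (- (2 * pi * real (sig n k l) * (real r - real s) / real n))"
    by simp
qed

lemma Fs_nz: assumes k1: "1 \<le> k" and kn: "k < n"
  and nd: "\<not> int n dvd int k * (int r - int s)"
  shows "Fs n k r s \<noteq> 0"
proof
  assume F0: "Fs n k r s = 0"
  define d where "d = int r - int s"
  define z where "z = cis (2 * pi * real_of_int d / real n)"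
  have n0: "n > 0" using kn by simp
  have zp: "\<And>m. z ^ m = cis (2 * pi * real_of_int (int m * d) / real n)"
    unfolding z_def DeMoivre by (simp add: field_simps)
  have zn: "z ^ n = 1" unfolding zp using cis_root[OF n0, of "int n * d"] by simp
  have zk: "z ^ k \<noteq> 1" unfolding zp using cis_root[OF n0, of "int k * d"] nd d_def by simp
  have "Fs n k r s = (\<Sum>l<k. z ^ sig n k l)" unfolding Fs_def zp d_def
    by (intro sum.cong refl) (simp add: field_simps)
  hence "(\<Sum>m<k. z ^ m) = 0" using sig_sum[OF zn k1 kn] F0 by simp
  hence "z ^ k - 1 = 0" using power_diff_1_eq[of z k] by simp
  thus False using zk by simp
qed

lemma pigeon:
  assumes R: "R \<subseteq> {0..<n}" and cR: "card R = k" and k1: "1 \<le> k" and kn: "k < n"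
    and M: "\<forall>M::nat. M > 0 \<longrightarrow> n \<noteq> M * k"
  shows "\<exists>r\<in>R. \<exists>s\<in>R. \<not> int n dvd int k * (int r - int s)"
proof (rule ccontr)
  assume "\<not> ?thesis"
  hence H: "\<And>r s. r \<in> R \<Longrightarrow> s \<in> R \<Longrightarrow> int n dvd int k * (int r - int s)" by blast
  define g where "g = gcd n k"
  define n' where "n' = n div g"
  define k' where "k' = k div g"
  have g0: "g > 0" unfolding g_def using k1 by simp
  have nn: "n = n' * g" unfolding n'_def g_def by simp
  have kk: "k = k' * g" unfolding k'_def g_def by simp
  have cop: "coprime n' k'" unfolding n'_def k'_def g_def using k1 by (intro div_gcd_coprime) simp
  have n'0: "n' > 0" using nn kn by (metis bot_nat_0.not_eq_extremum mult_is_0 not_less_zero)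
  have D: "\<And>r s. r \<in> R \<Longrightarrow> s \<in> R \<Longrightarrow> r mod n' = s mod n'"
  proof -
    fix r s assume rs: "r \<in> R" "s \<in> R"
    have "int n' * int g dvd int k' * (int r - int s) * int g"
      using H[OF rs] nn kk by (simp add: mult_ac)
    hence "int n' dvd int k' * (int r - int s)" using g0 by simp
    hence "int n' dvd (int r - int s)" using cop
      by (metis coprime_dvd_mult_right_iff coprime_int_iff)
    hence "int r mod int n' = int s mod int n'" by (simp add: mod_eq_dvd_iff)
    thus "r mod n' = s mod n'" by (metis of_nat_eq_iff zmod_int)
  qed
  have inj: "inj_on (\<lambda>r. r div n') R"
  proof
    fix r s assume rs: "r \<in> R" "s \<in> R" and e: "r div n' = s div n'"
    have "r = n' * (r div n') + r mod n'" by simp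
    also have "\<dots> = n' * (s div n') + s mod n'" using e D[OF rs] by simp
    also have "\<dots> = s" by simp
    finally show "r = s" .
  qed
  have img: "(\<lambda>r. r div n') ` R \<subseteq> {..<g}"
  proof
    fix x assume "x \<in> (\<lambda>r. r div n') ` R"
    then obtain r where r: "r \<in> R" "x = r div n'" by blast
    have "r < g * n'" using r R nn by (auto simp: mult.commute)
    thus "x \<in> {..<g}" using r by (simp add: less_mult_imp_div_less)
  qed
  have "k \<le> g" using card_inj_on_le[OF inj img] cR by simp
  moreover have "g \<le> k" unfolding g_def using k1 by simp
  ultimately have "g = k" by simp
  hence "k dvd n" unfolding g_def by (metis gcd_dvd1)
  then obtain M where "n = k * M" by blast
  moreover have "M > 0" using calculation kn by (cases M) auto
  ultimately show False using M by (simp add: mult.commute)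
qed

lemma pick_atLeast0: "j < k \<Longrightarrow> pick {0..<k} j = j"
proof -
  assume j: "j < k"
  have "card {a \<in> {0..<k}. a < j} = j"
  proof -
    have "{a \<in> {0..<k}. a < j} = {0..<j}" using j by auto
    thus ?thesis by simp
  qed
  thus ?thesis using pick_card_in_set[of j "{0..<k}"] j by simp
qed


theorem theorem2:
  fixes n k :: nat and R :: "nat set"
  assumes "1 \<le> k" and "k < n"
    and "\<not> (even n \<and> even k)"
    and "\<forall>M::nat. M > 0 \<longrightarrow> n \<noteq> M * k"
    and "R \<subseteq> {0..<n}" and "card R = k"
  shows "let Gk = submatrix (G_mat n k) R {0..<k};
             A = Gk * mat_adjoint Gk
         in Min {t::real. eigenvalue A (complex_of_real t)} < 1
          \<and> Max {t::real. eigenvalue A (complex_of_real t)} > 1"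
proof -
  note k1 = assms(1) and kn = assms(2) and R = assms(5) and cR = assms(6)
  define G where "G = G_mat n k"
  define Gk where "Gk = submatrix G R {0..<k}"
  define A where "A = Gk * mat_adjoint Gk"
  have G: "G \<in> carrier_mat n k" unfolding G_def by (rule G_carrier)
  have finR: "finite R" using R finite_subset by blast
  have r1: "{i. i < dim_row G \<and> i \<in> R} = R" using G R by auto
  have c1: "{j. j < dim_col G \<and> j \<in> {0..<k}} = {0..<k}" using G by auto
  have c1': "{j. j < dim_col G \<and> j < k} = {0..<k}" using G by auto
  have Gk: "Gk \<in> carrier_mat k k"
    unfolding Gk_def by (rule carrier_matI) (simp_all add: dim_submatrix r1 c1 c1' cR)
  have A: "A \<in> carrier_mat k k" unfolding A_def using Gk by simp
  have pR: "\<And>a. a < k \<Longrightarrow> pick R a \<in> R" using cR by (intro pick_in_set) simp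
  have pn: "\<And>a. a < k \<Longrightarrow> pick R a < n"
  proof -
    fix a assume "a < k"
    hence "pick R a \<in> {0..<n}" using pR R by blast
    thus "pick R a < n" by simp
  qed
  have Gki: "\<And>a j. a < k \<Longrightarrow> j < k \<Longrightarrow> Gk $$ (a,j) = G $$ (pick R a, j)"
    unfolding Gk_def using cR by (subst submatrix_index) (simp_all add: r1 c1 c1' pick_atLeast0)
  have Ai: "\<And>a b. a < k \<Longrightarrow> b < k \<Longrightarrow> A $$ (a,b) = complex_of_real (1 / real k) * Fs n k (pick R a) (pick R b)"
  proof -
    fix a b assume a: "a < k" and b: "b < k"
    have "A $$ (a,b) = (\<Sum>j<k. Gk $$ (a,j) * cnj (Gk $$ (b,j)))"
      unfolding A_def by (rule XXH_index[OF Gk a b])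
    also have "\<dots> = (\<Sum>j<k. G $$ (pick R a,j) * cnj (G $$ (pick R b,j)))"
      using a b by (intro sum.cong refl) (simp add: Gki)
    also have "\<dots> = (G * mat_adjoint G) $$ (pick R a, pick R b)"
      by (rule XXH_index[OF G pn[OF a] pn[OF b], symmetric])
    also have "\<dots> = complex_of_real (1 / real k) * Fs n k (pick R a) (pick R b)"
      unfolding G_def Fs_def by (rule GGH[OF k1 kn pn[OF a] pn[OF b]])
    finally show "A $$ (a,b) = complex_of_real (1 / real k) * Fs n k (pick R a) (pick R b)" .
  qed
  have herm: "\<And>a b. a < k \<Longrightarrow> b < k \<Longrightarrow> A $$ (b,a) = cnj (A $$ (a,b))"
  proof -
    fix a b assume a: "a < k" and b: "b < k"
    show "A $$ (b,a) = cnj (A $$ (a,b))"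
      unfolding Ai[OF b a] Ai[OF a b] Fs_herm[of n k "pick R b" "pick R a"]
      by (simp only: complex_cnj_mult complex_cnj_complex_of_real)
  qed
  have dg: "\<And>a. a < k \<Longrightarrow> A $$ (a,a) = 1"
    using k1 by (simp add: Ai Fs_diag)
  obtain r s where rs: "r \<in> R" "s \<in> R" and nd: "\<not> int n dvd int k * (int r - int s)"
    using pigeon[OF R cR k1 kn assms(4)] by blast
  have rsne: "r \<noteq> s" using nd by auto
  define a where "a = card {x \<in> R. x < r}"
  define b where "b = card {x \<in> R. x < s}"
  have ak: "a < k" unfolding a_def cR[symmetric]
    using rs(1) finR by (intro psubset_card_mono) auto
  have bk: "b < k" unfolding b_def cR[symmetric]
    using rs(2) finR by (intro psubset_card_mono) auto
  have pa: "pick R a = r" unfolding a_def by (rule pick_card_in_set[OF rs(1)])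
  have pb: "pick R b = s" unfolding b_def by (rule pick_card_in_set[OF rs(2)])
  have ab: "a \<noteq> b" using pa pb rsne by auto
  have Aab: "A $$ (a,b) \<noteq> 0" using Ai[OF ak bk] pa pb Fs_nz[OF k1 kn nd] k1 by simp
  have "Min {t::real. eigenvalue A (complex_of_real t)} < 1 \<and>
         Max {t::real. eigenvalue A (complex_of_real t)} > 1"
    by (rule herm_eig[OF A k1 herm dg ak bk ab Aab])
  thus ?thesis unfolding Let_def A_def Gk_def G_def .
qed

end
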